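(* Let $X$ be a connected, locally connected normal space with at least two points. Then $X$ has a quotient space homeomorphic to the unit interval $[0,1]$; equivalently, there exists a continuous quotient surjection $f\colon X\to[0,1]$.
   Context: Here a normal space is a topological space in which singletons are closed and any two disjoint closed sets have disjoint open neighbourhoods. A surjection $f\colon X\to Y$ is a quotient map if for every $G\subseteq Y$, $G$ is open in $Y$ iff $f^{-1}(G)$ is open in $X$. "$X$ has a quotient homeomorphic to $[0,1]$" means there is an equivalence relation on $X$ whose quotient space is homeomorphic to $[0,1]$. *)

theory Defs
  imports "HOL-Analysis.Analysis"
begin

end

theory Submission
  imports Defs
begin

lemma right_side:
  fixes f :: "'a \<Rightarrow> real"
  assumes conn: "connected_space X" and lc: "locally_connected_space X"
    and f: "continuous_map X euclideanreal f"
    and V: "openin X {x\<in>topspace X. f x \<in> U}" and tU: "t \<in> U"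
    and a: "a \<in> topspace X" "f a \<le> t" and b: "b \<in> topspace X" "t < f b"
  shows "\<exists>s>t. {t..s} \<subseteq> U"
proof -
  define B where "B = {x\<in>topspace X. f x \<in> {t<..}}"
  have Bo: "openin X B" unfolding B_def
    using openin_continuous_map_preimage[OF f, of "{t<..}"] by simp
  have "\<exists>x\<in>X closure_of B. f x = t"
  proof (rule ccontr)
    assume nx: "\<not> ?thesis"
    have C: "closedin X {x\<in>topspace X. f x \<in> {t..}}"
      using closedin_continuous_map_preimage[OF f, of "{t..}"] by simp
    have "B \<subseteq> {x\<in>topspace X. f x \<in> {t..}}" unfolding B_def by auto
    hence "X closure_of B \<subseteq> {x\<in>topspace X. f x \<in> {t..}}"
      using C closure_of_minimal by blast
    hence cl: "X closure_of B \<subseteq> {x\<in>topspace X. f x \<in> {t..}}" .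
    have "X closure_of B \<subseteq> B"
    proof
      fix z assume z: "z \<in> X closure_of B"
      hence "z \<in> topspace X" "f z \<ge> t" using cl by auto
      moreover have "f z \<noteq> t" using nx z by blast
      ultimately show "z \<in> B" unfolding B_def by auto
    qed
    moreover have "B \<subseteq> X closure_of B" by (rule closure_of_subset[OF openin_subset[OF Bo]])
    ultimately have "X closure_of B = B" by (rule subset_antisym)
    hence "closedin X B" by (metis closedin_closure_of)
    moreover have "B \<noteq> {}" using b unfolding B_def by auto
    moreover have "a \<notin> B" using a unfolding B_def by auto
    hence "B \<noteq> topspace X" using a(1) by blast
    ultimately show False using conn Bo connected_space_clopen_in by blast
  qed
  then obtain x where x: "x \<in> X closure_of B" "f x = t" by blast
  have xt: "x \<in> topspace X" using x(1) by (simp add: in_closure_of)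
  have xV: "x \<in> {x\<in>topspace X. f x \<in> U}" using xt x(2) tU by simp
  obtain W where W: "openin X W" "connectedin X W" "x \<in> W" "W \<subseteq> {x\<in>topspace X. f x \<in> U}"
    using lc V xV unfolding locally_connected_space by meson
  have "\<exists>y. y \<in> B \<and> y \<in> W" using x(1) W(1,3) unfolding in_closure_of by blast
  then obtain y where y: "y \<in> B" "y \<in> W" by blast
  have "connectedin euclideanreal (f ` W)" using connectedin_continuous_map_image[OF f W(2)] .
  hence "connected (f ` W)" by simp
  moreover have "t \<in> f ` W" using x(2) W(3) by force
  moreover have "f y \<in> f ` W" using y by simp
  ultimately have "{t..f y} \<subseteq> f ` W" by (rule connected_contains_Icc)
  moreover have "f ` W \<subseteq> U" using W(4) by auto
  ultimately have sub: "{t..f y} \<subseteq> U" by (rule subset_trans)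
  have "f y > t" using y(1) unfolding B_def by simp
  with sub show ?thesis by (intro exI[of _ "f y"]) simp
qed

theorem mainTheorem3:
  fixes X :: "'a topology"
  assumes "connected_space X"
    and "locally_connected_space X"
    and "t1_space X"
    and "normal_space X"
    and "\<exists>a b. a \<in> topspace X \<and> b \<in> topspace X \<and> a \<noteq> b"
  shows "\<exists>f. continuous_map X (top_of_set {0..1::real}) f
              \<and> quotient_map X (top_of_set {0..1::real}) f"
proof -
  obtain a b where ab: "a \<in> topspace X" "b \<in> topspace X" "a \<noteq> b" using assms(5) by blast
  have t1: "\<forall>x \<in> topspace X. closedin X {x}" using assms(3) unfolding t1_space_closedin_singleton .
  have ca: "closedin X {a}" "closedin X {b}" using t1 ab(1,2) by simp_all
  have dj: "disjnt {a} {b}" using ab(3) by simp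
  obtain f where f: "continuous_map X (top_of_set {0..1::real}) f" "f ` {a} \<subseteq> {0}" "f ` {b} \<subseteq> {1}"
    using Urysohn_lemma[OF assms(4) ca dj, of 0 1] by auto
  have fR: "continuous_map X euclideanreal f" and fin: "f \<in> topspace X \<rightarrow> {0..1}"
    using f(1) unfolding continuous_map_in_subtopology by simp_all
  have fa: "f a = 0" and fb: "f b = 1" using f(2,3) by auto
  have "connectedin euclideanreal (f ` topspace X)"
    using connectedin_continuous_map_image[OF fR] connectedin_topspace[of X] assms(1) by simp
  hence "connected (f ` topspace X)" by simp
  moreover have "0 \<in> f ` topspace X" using ab(1) fa by (metis imageI)
  moreover have "1 \<in> f ` topspace X" using ab(2) fb by (metis imageI)
  ultimately have "{0..1} \<subseteq> f ` topspace X" by (rule connected_contains_Icc)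
  hence img: "f ` topspace X = {0..1}" using fin by auto
  have "quotient_map X (top_of_set {0..1::real}) f"
    unfolding quotient_map_def
  proof (intro conjI allI impI)
    show "f ` topspace X = topspace (top_of_set {0..1::real})" using img by simp
    fix U :: "real set" assume U: "U \<subseteq> topspace (top_of_set {0..1::real})"
    hence U01: "U \<subseteq> {0..1}" by simp
    show "openin X {x \<in> topspace X. f x \<in> U} = openin (top_of_set {0..1}) U"
    proof
      assume V: "openin X {x \<in> topspace X. f x \<in> U}"
      have V': "openin X {x \<in> topspace X. (\<lambda>x. - f x) x \<in> uminus ` U}"
        using V by (simp add: image_iff)
      have fR': "continuous_map X euclideanreal (\<lambda>x. - f x)"
        using fR by (simp add: continuous_map_minus)
      show "openin (top_of_set {0..1}) U"
        unfolding openin_euclidean_subtopology_iff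
      proof (intro conjI ballI)
        show "U \<subseteq> {0..1}" by fact
        fix t assume tU: "t \<in> U"
        have t01: "0 \<le> t" "t \<le> 1" using tU U01 by auto
        have "\<exists>e1>0. {t..t+e1} \<inter> {0..1} \<subseteq> U"
        proof (cases "t < 1")
          case True
          then obtain s where "s > t" "{t..s} \<subseteq> U"
            using right_side[OF assms(1,2) fR V tU ab(1) _ ab(2)] fa fb t01 by auto
          thus ?thesis by (intro exI[of _ "s - t"]) auto
        next
          case False
          hence "t = 1 \<or> t = 0" using t01 by auto
          thus ?thesis using tU False t01 by (intro exI[of _ 1]) auto
        qed
        moreover have "\<exists>e2>0. {t-e2..t} \<inter> {0..1} \<subseteq> U"
        proof (cases "t > 0")
          case True
          have mt: "-t \<in> uminus ` U" using tU by simp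
          have "\<exists>s>-t. {-t..s} \<subseteq> uminus ` U"
            using right_side[OF assms(1,2) fR' V' mt ab(2) _ ab(1)] fa fb t01 True by simp
          then obtain s where s: "s > -t" "{-t..s} \<subseteq> uminus ` U" by blast
          have "{-s..t} \<subseteq> U"
          proof
            fix z assume "z \<in> {-s..t}"
            hence "-z \<in> {-t..s}" by auto
            hence "-z \<in> uminus ` U" using s by blast
            thus "z \<in> U" by (metis add.inverse_inverse image_iff)
          qed
          thus ?thesis using s by (intro exI[of _ "s + t"]) auto
        next
          case False
          hence "t = 1 \<or> t = 0" using t01 by auto
          thus ?thesis using tU False t01 by (intro exI[of _ 1]) auto
        qed
        ultimately obtain e1 e2 where e: "e1 > 0" "e2 > 0" "{t..t+e1} \<inter> {0..1} \<subseteq> U"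
          "{t-e2..t} \<inter> {0..1} \<subseteq> U" by blast
        show "\<exists>e>0. \<forall>x'\<in>{0..1}. dist x' t < e \<longrightarrow> x' \<in> U"
        proof (intro exI[of _ "min e1 e2"] conjI ballI impI)
          show "min e1 e2 > 0" using e by simp
          fix x' :: real assume "x' \<in> {0..1}" "dist x' t < min e1 e2"
          hence x01: "x' \<in> {0..1}" and d: "\<bar>x' - t\<bar> < min e1 e2"
            unfolding dist_real_def by auto
          show "x' \<in> U"
          proof (cases "x' \<le> t")
            case True
            hence "x' \<in> {t-e2..t} \<inter> {0..1}" using x01 d by auto
            thus ?thesis using e(4) by blast
          next
            case False
            hence "x' \<in> {t..t+e1} \<inter> {0..1}" using x01 d by auto
            thus ?thesis using e(3) by blast
          qed
        qed
      qed
    next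
      assume "openin (top_of_set {0..1}) U"
      thus "openin X {x \<in> topspace X. f x \<in> U}"
        using openin_continuous_map_preimage[OF f(1)] by blast
    qed
  qed
  thus ?thesis using f(1) by blast
qed

end
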